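(* Let $n\ge1$ and $\vec p,\vec q\in[0,1]^n$. Let $S_{\vec p}$ be a sum of $n$ independent random variables $X_i\sim\mathrm{Ber}(p_i)$, and similarly $S_{\vec q}$, with variances $\sigma_{\vec p}^2=\sum_ip_i(1-p_i)$ and $\sigma_{\vec q}^2=\sum_iq_i(1-q_i)$, and let $\Delta=\sum_{i=1}^n|p_i-q_i|$. Then $$\mathrm{TV}(S_{\vec p},S_{\vec q})\le\frac{2C_{\mathrm{BCV}}\,\Delta}{\sqrt{\sigma_{\vec p}^2+1}+\sqrt{\sigma_{\vec q}^2+1}}.$$
   Context: $\mathrm{TV}(P,Q)=\frac12\sum_\omega|P(\omega)-Q(\omega)|$ is the total variation distance of laws. $\eta_{\mathrm{BCV}}$ is the sharp Baillon–Cominetti–Vaisman constant: the smallest constant such that every finite sum $Z$ of independent Bernoulli random variables with $\mathrm{Var}(Z)>0$ satisfies $\max_k\mathbb P(Z=k)\le\eta_{\mathrm{BCV}}/\sqrt{\mathrm{Var}(Z)}$ ($\eta_{\mathrm{BCV}}\approx0.4688$). $C_{\mathrm{BCV}}=\sqrt{5/4+\eta_{\mathrm{BCV}}^2}$. *)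

theory Defs
  imports "HOL-Probability.Probability"
begin

fun bern_sum :: "(nat \<Rightarrow> real) \<Rightarrow> nat \<Rightarrow> nat pmf" where
  "bern_sum p 0 = return_pmf 0"
| "bern_sum p (Suc n) =
     bind_pmf (bern_sum p n) (\<lambda>s. map_pmf (\<lambda>b. s + of_bool b) (bernoulli_pmf (p n)))"

definition bern_var :: "(nat \<Rightarrow> real) \<Rightarrow> nat \<Rightarrow> real" where
  "bern_var p n = (\<Sum>i<n. p i * (1 - p i))"

definition TV :: "nat pmf \<Rightarrow> nat pmf \<Rightarrow> real" where
  "TV P Q = 1/2 * (\<Sum>\<^sub>\<infinity>k. \<bar>pmf P k - pmf Q k\<bar>)"

definition eta_BCV :: real where
  "eta_BCV = Inf {c. \<forall>(n::nat) (p::nat \<Rightarrow> real).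
      (\<forall>i<n. 0 \<le> p i \<and> p i \<le> 1) \<longrightarrow> bern_var p n > 0 \<longrightarrow>
      (\<forall>k. pmf (bern_sum p n) k \<le> c / sqrt (bern_var p n))}"

definition C_BCV :: real where
  "C_BCV = sqrt (5/4 + eta_BCV^2)"

end

theory Submission
  imports Defs
begin

definition sh :: "(nat \<Rightarrow> real) \<Rightarrow> nat \<Rightarrow> real" where
  "sh f k = (if k = 0 then 0 else f (k - 1))"

definition stepf :: "(nat \<Rightarrow> real) \<Rightarrow> real \<Rightarrow> nat \<Rightarrow> real" where
  "stepf f a k = (1 - a) * f k + a * sh f k"

fun bb :: "(nat \<Rightarrow> real) \<Rightarrow> nat \<Rightarrow> nat \<Rightarrow> real" where
  "bb r 0 = (\<lambda>k. if k = 0 then 1 else 0)"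
| "bb r (Suc n) = stepf (bb r n) (r n)"

definition skip :: "nat \<Rightarrow> (nat \<Rightarrow> real) \<Rightarrow> nat \<Rightarrow> real" where
  "skip i r j = (if j < i then r j else r (Suc j))"

lemma bb_cong: "(\<And>j. j < n \<Longrightarrow> r j = r' j) \<Longrightarrow> bb r n = bb r' n"
  by (induction n) auto

lemma bern_var_cong: "(\<And>j. j < n \<Longrightarrow> r j = r' j) \<Longrightarrow> bern_var r n = bern_var r' n"
  unfolding bern_var_def by (rule sum.cong) auto

lemma sh_stepf: "sh (stepf f a) = stepf (sh f) a"
  by (rule ext) (simp add: sh_def stepf_def)

lemma sh_stepf_pt: "sh (stepf f a) k = (1 - a) * sh f k + a * sh (sh f) k"
  by (simp add: sh_def stepf_def)

lemma stepf_comm: "stepf (stepf f a) c = stepf (stepf f c) a"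
  by (rule ext) (simp add: stepf_def[of "stepf f a"] stepf_def[of "stepf f c"] sh_stepf_pt,
      simp add: stepf_def algebra_simps)

lemma bb_skip: "i < n \<Longrightarrow> bb r n = stepf (bb (skip i r) (n - 1)) (r i)"
proof (induction n)
  case 0 then show ?case by simp
next
  case (Suc m)
  show ?case
  proof (cases "i = m")
    case True
    have "bb (skip i r) m = bb r m" by (rule bb_cong) (simp add: skip_def True)
    then show ?thesis using True by simp
  next
    case False
    then have im: "i < m" using Suc.prems by simp
    then obtain m' where m': "m = Suc m'" by (cases m) auto
    have "bb r (Suc m) = stepf (stepf (bb (skip i r) m') (r i)) (r m)"
      using Suc.IH[OF im] m' by simp
    also have "\<dots> = stepf (stepf (bb (skip i r) m') (r m)) (r i)" by (rule stepf_comm)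
    also have "skip i r m' = r m" using im m' by (simp add: skip_def)
    then have "stepf (bb (skip i r) m') (r m) = bb (skip i r) m" using m' by simp
    finally show ?thesis by simp
  qed
qed

lemma bern_var_skip: "i < n \<Longrightarrow> bern_var r n = bern_var (skip i r) (n - 1) + r i * (1 - r i)"
proof (induction n)
  case 0 then show ?case by simp
next
  case (Suc m)
  show ?case
  proof (cases "i = m")
    case True
    have "bern_var (skip i r) m = bern_var r m" by (rule bern_var_cong) (simp add: skip_def True)
    then show ?thesis using True by (simp add: bern_var_def)
  next
    case False
    then have im: "i < m" using Suc.prems by simp
    then obtain m' where m': "m = Suc m'" by (cases m) auto
    have "skip i r m' = r m" using im m' by (simp add: skip_def)
    then show ?thesis using Suc.IH[OF im] m' by (simp add: bern_var_def)
  qed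
qed

lemma bb_support: "n < k \<Longrightarrow> bb r n k = 0"
  by (induction n arbitrary: k) (auto simp: stepf_def sh_def)

lemma bb_nonneg: "(\<forall>j<n. 0 \<le> r j \<and> r j \<le> 1) \<Longrightarrow> 0 \<le> bb r n k"
  by (induction n arbitrary: k) (auto simp: stepf_def sh_def)

lemma sum_sh: "(\<Sum>k<Suc N. g k * sh f k) = (\<Sum>k<N. g (Suc k) * f k)"
  by (subst sum.lessThan_Suc_shift) (simp add: sh_def)

lemma bb_sum_gen: "n < N \<Longrightarrow> (\<Sum>k<N. (real k - c)^2 * bb r n k) = bern_var r n + ((\<Sum>i<n. r i) - c)^2"
proof (induction n arbitrary: N c)
  case 0
  then show ?case by (simp add: bern_var_def if_distrib sum.If_cases lessThan_def)
next
  case (Suc n)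
  then obtain N' where N': "N = Suc N'" "n < N'" by (cases N) auto
  have z: "bb r n N' = 0" using N' bb_support by simp
  have "(\<Sum>k<N. (real k - c)^2 * bb r (Suc n) k) =
      (\<Sum>k<N. (1 - r n) * ((real k - c)^2 * bb r n k) + r n * ((real k - c)^2 * sh (bb r n) k))"
    by (simp add: stepf_def algebra_simps)
  also have "\<dots> = (1 - r n) * (\<Sum>k<N. (real k - c)^2 * bb r n k) + r n * (\<Sum>k<N. (real k - c)^2 * sh (bb r n) k)"
    by (simp add: sum.distrib sum_distrib_left)
  also have "(\<Sum>k<N. (real k - c)^2 * sh (bb r n) k) = (\<Sum>k<N'. (real k - (c - 1))^2 * bb r n k)"
    unfolding N' sum_sh by (simp add: algebra_simps)
  also have "\<dots> = bern_var r n + ((\<Sum>i<n. r i) - (c - 1))^2" using Suc.IH N' by simp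
  also have "(\<Sum>k<N. (real k - c)^2 * bb r n k) = bern_var r n + ((\<Sum>i<n. r i) - c)^2"
    by (rule Suc.IH) (use N' in simp)
  finally show ?case by (simp add: bern_var_def power2_eq_square algebra_simps)
qed


lemma pmf_map_Suc: "pmf (map_pmf Suc A) k = (if k = 0 then 0 else pmf A (k - 1))"
proof (cases k)
  case 0
  have "Suc -` {0} = ({}::nat set)" by auto
  then show ?thesis using 0 by (simp add: pmf_map)
next
  case (Suc j)
  then show ?thesis using pmf_map_inj'[of Suc A j] by simp
qed

lemma bern_sum_swap: "bern_sum p (Suc n) =
   bind_pmf (bernoulli_pmf (p n)) (\<lambda>b. map_pmf (\<lambda>s. s + of_bool b) (bern_sum p n))"
  by (simp add: map_pmf_def bind_commute_pmf[of "bern_sum p n"])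

lemma bb_pmf: "(\<forall>j<n. 0 \<le> r j \<and> r j \<le> 1) \<Longrightarrow> pmf (bern_sum r n) k = bb r n k"
proof (induction n arbitrary: k)
  case 0
  then show ?case by simp
next
  case (Suc n)
  have r: "0 \<le> r n" "r n \<le> 1" using Suc.prems by auto
  have IH: "\<And>k. pmf (bern_sum r n) k = bb r n k" using Suc by simp
  have "pmf (bern_sum r (Suc n)) k =
     pmf (map_pmf Suc (bern_sum r n)) k * r n + pmf (bern_sum r n) k * (1 - r n)"
    unfolding bern_sum_swap pmf_bind using r by simp
  also have "\<dots> = bb r (Suc n) k"
    by (simp add: pmf_map_Suc IH stepf_def sh_def)
  finally show ?case .
qed

lemma bb_sum1: "n < N \<Longrightarrow> (\<Sum>k<N. bb r n k) = 1"
proof (induction n arbitrary: N)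
  case 0
  then show ?case by (simp add: sum.If_cases lessThan_def)
next
  case (Suc n)
  then obtain N' where N': "N = Suc N'" "n < N'" by (cases N) auto
  have "(\<Sum>k<N. bb r (Suc n) k) = (\<Sum>k<N. (1 - r n) * bb r n k + r n * sh (bb r n) k)"
    by (simp add: stepf_def)
  also have "\<dots> = (1 - r n) * (\<Sum>k<N. bb r n k) + r n * (\<Sum>k<N. 1 * sh (bb r n) k)"
    by (simp add: sum.distrib sum_distrib_left)
  also have "(\<Sum>k<N. 1 * sh (bb r n) k) = (\<Sum>k<N'. 1 * bb r n k)" unfolding N' sum_sh by simp
  finally show ?case using Suc.IH[of N] Suc.IH[of N'] N' by simp
qed

definition unimodal_at :: "(nat \<Rightarrow> real) \<Rightarrow> nat \<Rightarrow> bool" where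
  "unimodal_at f m \<longleftrightarrow> (\<forall>k<m. f k \<le> f (Suc k)) \<and> (\<forall>k\<ge>m. f (Suc k) \<le> f k)"

lemma bb_unimodal: "(\<forall>j<n. 0 \<le> r j \<and> r j \<le> 1) \<Longrightarrow> \<exists>m\<le>n. unimodal_at (bb r n) m"
proof (induction n)
  case 0
  show ?case by (rule exI[of _ 0]) (simp add: unimodal_at_def)
next
  case (Suc n)
  then obtain m where m: "m \<le> n" "unimodal_at (bb r n) m" by auto
  have r: "0 \<le> r n" "r n \<le> 1" using Suc.prems by auto
  have nn: "\<And>k. 0 \<le> bb r n k" using Suc.prems by (intro bb_nonneg) auto
  let ?f = "bb r n" and ?a = "r n"
  have d: "bb r (Suc n) (Suc k) - bb r (Suc n) k =
     (1 - ?a) * (?f (Suc k) - ?f k) + ?a * (?f k - sh ?f k)" for k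
    by (simp add: stepf_def sh_def algebra_simps)
  have up1: "?f (Suc k) - ?f k \<ge> 0" if "k < m" for k using m(2) that by (simp add: unimodal_at_def)
  have up2: "?f k - sh ?f k \<ge> 0" if "k \<le> m" for k
  proof (cases k)
    case 0 then show ?thesis using nn by (simp add: sh_def)
  next
    case (Suc j) then show ?thesis using m(2) that by (simp add: unimodal_at_def sh_def)
  qed
  have dn1: "?f (Suc k) - ?f k \<le> 0" if "m \<le> k" for k using m(2) that by (simp add: unimodal_at_def)
  have dn2: "?f k - sh ?f k \<le> 0" if "m < k" for k
  proof (cases k)
    case 0 then show ?thesis using that by simp
  next
    case (Suc j) then show ?thesis using m(2) that by (simp add: unimodal_at_def sh_def)
  qed
  have inc: "bb r (Suc n) k \<le> bb r (Suc n) (Suc k)" if "k < m" for k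
  proof -
    have "0 \<le> (1 - ?a) * (?f (Suc k) - ?f k)" using up1[OF that] r by simp
    moreover have "0 \<le> ?a * (?f k - sh ?f k)" using up2[of k] that r by simp
    ultimately show ?thesis using d[of k] by linarith
  qed
  have dec: "bb r (Suc n) (Suc k) \<le> bb r (Suc n) k" if "Suc m \<le> k" for k
  proof -
    have "(1 - ?a) * (?f (Suc k) - ?f k) \<le> 0" using dn1[of k] that r by (simp add: mult_nonneg_nonpos)
    moreover have "?a * (?f k - sh ?f k) \<le> 0" using dn2[of k] that r by (simp add: mult_nonneg_nonpos)
    ultimately show ?thesis using d[of k] by linarith
  qed
  show ?case
  proof (cases "bb r (Suc n) m \<le> bb r (Suc n) (Suc m)")
    case True
    have "unimodal_at (bb r (Suc n)) (Suc m)"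
      unfolding unimodal_at_def using inc dec True less_Suc_eq by auto
    then show ?thesis using m(1) by (intro exI[of _ "Suc m"]) auto
  next
    case False
    have "unimodal_at (bb r (Suc n)) m"
      unfolding unimodal_at_def using inc dec False
      by (metis Suc_leI le_neq_implies_less nle_le)
    then show ?thesis using m(1) by (intro exI[of _ m]) auto
  qed
qed

lemma tele_abs:
  assumes "unimodal_at f m" "0 \<le> f 0"
  shows "(\<Sum>k<Suc N. \<bar>f k - sh f k\<bar>) = (if N < m then f N else 2 * f m - f N)"
proof (induction N)
  case 0
  then show ?case using assms by (simp add: sh_def)
next
  case (Suc N)
  have "(\<Sum>k<Suc (Suc N). \<bar>f k - sh f k\<bar>) = (\<Sum>k<Suc N. \<bar>f k - sh f k\<bar>) + \<bar>f (Suc N) - f N\<bar>"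
    by (simp add: sh_def)
  also have "\<dots> = (if Suc N < m then f (Suc N) else 2 * f m - f (Suc N))"
  proof (cases "Suc N < m")
    case True
    then show ?thesis using Suc assms(1) unfolding unimodal_at_def by auto
  next
    case False
    show ?thesis
    proof (cases "N < m")
      case True
      then have "m = Suc N" using False by simp
      then show ?thesis using Suc assms(1) True unfolding unimodal_at_def by auto
    next
      case False
      then show ?thesis using Suc assms(1) unfolding unimodal_at_def by auto
    qed
  qed
  finally show ?case .
qed


definition LC :: "(nat \<Rightarrow> real) \<Rightarrow> bool" where
  "LC f \<longleftrightarrow> (\<forall>x u v y. x \<le> u \<longrightarrow> u \<le> y \<longrightarrow> x \<le> v \<longrightarrow> v \<le> y \<longrightarrow> x + y = u + v
      \<longrightarrow> f x * f y \<le> f u * f v)"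

lemma LC_stepf:
  assumes lc: "LC f" and nn: "\<And>k. 0 \<le> f k" and a: "0 \<le> a" "a \<le> 1"
  shows "LC (stepf f a)"
  unfolding LC_def
proof (intro allI impI)
  fix x u v y :: nat
  assume h: "x \<le> u" "u \<le> y" "x \<le> v" "v \<le> y" "x + y = u + v"
  let ?g = "stepf f a"
  show "?g x * ?g y \<le> ?g u * ?g v"
  proof (cases "u = x \<or> u = y")
    case True
    then have "(u = x \<and> v = y) \<or> (u = y \<and> v = x)" using h by auto
    then show ?thesis by (auto simp: mult.commute)
  next
    case False
    then have s: "x < u" "u < y" "x < v" "v < y" using h by auto
    have t1: "f x * f y \<le> f u * f v" using lc h unfolding LC_def by blast
    have t2: "sh f x * sh f y \<le> sh f u * sh f v"
    proof (cases "x = 0")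
      case True then show ?thesis using nn by (simp add: sh_def)
    next
      case False
      have "f (x - 1) * f (y - 1) \<le> f (u - 1) * f (v - 1)"
        by (rule lc[unfolded LC_def, rule_format]) (use s h False in arith)+
      then show ?thesis using False s by (simp add: sh_def)
    qed
    have t3: "f x * sh f y \<le> f u * sh f v"
    proof -
      have "f x * f (y - 1) \<le> f u * f (v - 1)"
        by (rule lc[unfolded LC_def, rule_format]) (use s h in arith)+
      then show ?thesis using s by (simp add: sh_def)
    qed
    have t4: "sh f x * f y \<le> sh f u * f v"
    proof (cases "x = 0")
      case True then show ?thesis using nn by (simp add: sh_def)
    next
      case False
      have "f (x - 1) * f y \<le> f (u - 1) * f v"
        by (rule lc[unfolded LC_def, rule_format]) (use s h False in arith)+
      then show ?thesis using False s by (simp add: sh_def)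
    qed
    have ex: "?g p * ?g q = (1-a)^2 * (f p * f q) + (1-a) * a * (f p * sh f q) + (1-a) * a * (sh f p * f q)
        + a^2 * (sh f p * sh f q)" for p q
      by (simp add: stepf_def power2_eq_square algebra_simps)
    have c1: "0 \<le> (1-a)^2" "0 \<le> (1-a) * a" "0 \<le> a^2" using a by auto
    show ?thesis unfolding ex
      using mult_left_mono[OF t1 c1(1)] mult_left_mono[OF t2 c1(3)] mult_left_mono[OF t3 c1(2)]
        mult_left_mono[OF t4 c1(2)] by linarith
  qed
qed

lemma bb_LC: "(\<forall>j<n. 0 \<le> r j \<and> r j \<le> 1) \<Longrightarrow> LC (bb r n)"
proof (induction n)
  case 0
  show ?case unfolding LC_def by auto
next
  case (Suc n)
  then show ?case using LC_stepf[of "bb r n" "r n"] bb_nonneg[of n r] by simp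
qed

lemma geom_sq_sum: "(\<Sum>t<T. (real t + 1)^2 / 2^t) = 12 - 2 * (real T^2 + 4 * real T + 6) / 2^T"
proof (induction T)
  case 0 then show ?case by simp
next
  case (Suc T)
  have "(\<Sum>t<Suc T. (real t + 1)^2 / 2^t) = (\<Sum>t<T. (real t + 1)^2 / 2^t) + (real T + 1)^2 / 2^T"
    by simp
  also have "\<dots> = 12 - 2 * (real T^2 + 4 * real T + 6) / 2^T + (real T + 1)^2 / 2^T"
    using Suc.IH by simp
  also have "\<dots> = 12 - 2 * (real (Suc T)^2 + 4 * real (Suc T) + 6) / 2^(Suc T)"
    by (simp add: field_simps power2_eq_square)
  finally show ?case .
qed

lemma tail_bound:
  fixes h :: "nat \<Rightarrow> real"
  assumes nn: "\<And>j. 0 \<le> h j" and dec: "\<And>j. h (Suc j) \<le> h j" and pos: "0 < h 0"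
    and lc: "\<And>a b. h 0 * h (a + b) \<le> h a * h b"
    and tot: "\<And>N. (\<Sum>j<N. h j) \<le> 1"
  shows "(\<Sum>j<N. (real j)^2 * h j) \<le> 324 / (h 0)^2"
proof -
  define M where "M = h 0"
  have mono: "h j \<le> h i" if "i \<le> j" for i j using lift_Suc_antimono_le[of h, OF dec that] .
  have tL: "real (Suc L) * h L \<le> 1" for L
  proof -
    have "real (Suc L) * h L = (\<Sum>j<Suc L. h L)" by simp
    also have "\<dots> \<le> (\<Sum>j<Suc L. h j)" by (rule sum_mono) (use mono in auto)
    also have "\<dots> \<le> 1" by (rule tot)
    finally show ?thesis .
  qed
  have M1: "M \<le> 1" using tL[of 0] M_def by simp
  have Mpos: "0 < M" using pos M_def by simp
  define L where "L = nat \<lceil>2 / M\<rceil>"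
  have L1: "2 / M \<le> real L" unfolding L_def by linarith
  have L2: "real L \<le> 3 / M"
  proof -
    have "real L = of_int \<lceil>2 / M\<rceil>" unfolding L_def using Mpos by simp
    then have "real L < 2 / M + 1" using ceiling_correct[of "2 / M"] by linarith
    also have "\<dots> \<le> 3 / M" using M1 Mpos by (simp add: field_simps)
    finally show ?thesis by simp
  qed
  have Lpos: "1 \<le> L"
  proof -
    have "2 \<le> 2 / M" using M1 Mpos by (simp add: field_simps)
    then show ?thesis using L1 by linarith
  qed
  have hL: "h L \<le> M / 2"
  proof -
    have "real (Suc L) * h L \<le> 1" by (rule tL)
    moreover have "2 / M \<le> real (Suc L)" using L1 by simp
    ultimately have "(2 / M) * h L \<le> 1" using nn[of L] mult_right_mono by (meson order_trans)
    then show ?thesis using Mpos by (simp add: field_simps)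
  qed
  have blk: "h (t * L) \<le> M / 2^t" for t
  proof (induction t)
    case 0 then show ?case using M_def by simp
  next
    case (Suc t)
    have "M * h (Suc t * L) \<le> h L * h (t * L)" using lc[of L "t * L"] M_def by (simp add: add.commute)
    also have "\<dots> \<le> (M / 2) * (M / 2^t)"
      using hL Suc.IH nn Mpos by (intro mult_mono) auto
    finally have "M * h (Suc t * L) \<le> M * (M / 2^Suc t)" by simp
    then show ?case using Mpos mult_le_cancel_left_pos by blast
  qed
  have termb: "(real j)^2 * h j \<le> real L^2 * M * ((real t + 1)^2 / 2^t)"
    if "j \<in> {t * L..<t * L + L}" for j t
  proof -
    have "h j \<le> M / 2^t" using mono[of "t * L" j] blk[of t] that by simp
    moreover have "real j \<le> (real t + 1) * real L" using that
    proof -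
      have "j < (t + 1) * L" using that by simp
      then have "real j < real ((t + 1) * L)" by linarith
      then show ?thesis by (simp add: algebra_simps)
    qed
    then have "(real j)^2 \<le> ((real t + 1) * real L)^2" by (intro power_mono) auto
    ultimately have "(real j)^2 * h j \<le> ((real t + 1) * real L)^2 * (M / 2^t)"
      using nn by (intro mult_mono) auto
    also have "((real t + 1) * real L)^2 * (M / 2^t) = real L^2 * M * ((real t + 1)^2 / 2^t)"
      by (simp add: power_mult_distrib)
    finally show ?thesis .
  qed
  have "(\<Sum>j<N. (real j)^2 * h j) \<le> (\<Sum>j<N * L. (real j)^2 * h j)"
    using Lpos nn by (intro sum_mono2) auto
  also have "\<dots> = (\<Sum>t<N. \<Sum>j\<in>{t * L..<t * L + L}. (real j)^2 * h j)"
    by (rule sum.nat_group[symmetric])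
  also have "\<dots> \<le> (\<Sum>t<N. \<Sum>j\<in>{t * L..<t * L + L}. real L^2 * M * ((real t + 1)^2 / 2^t))"
    by (intro sum_mono termb)
  also have "\<dots> = real L^3 * M * (\<Sum>t<N. (real t + 1)^2 / 2^t)"
    by (simp add: sum_distrib_left power3_eq_cube power2_eq_square algebra_simps)
  also have "\<dots> \<le> real L^3 * M * 12"
    unfolding geom_sq_sum using Mpos by (intro mult_left_mono) auto
  also have "\<dots> \<le> (3 / M)^3 * M * 12"
    using L2 Mpos by (intro mult_right_mono power_mono) auto
  also have "\<dots> = 324 / M^2" using Mpos by (simp add: field_simps power3_eq_cube power2_eq_square)
  finally show ?thesis unfolding M_def .
qed


lemma bb_sum_le1:
  assumes "\<forall>j<n. 0 \<le> r j \<and> r j \<le> 1"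
  shows "(\<Sum>k<N. bb r n k) \<le> 1"
proof -
  have "(\<Sum>k<N. bb r n k) \<le> (\<Sum>k<max N (Suc n). bb r n k)"
    using bb_nonneg[OF assms] by (intro sum_mono2) auto
  also have "\<dots> = 1" by (rule bb_sum1) simp
  finally show ?thesis .
qed

lemma unimodal_inc: assumes "unimodal_at f m" "i \<le> j" "j \<le> m" shows "f i \<le> f j"
  by (rule lift_Suc_mono_le_ivl[of "{..<m}" f i j]) (use assms in \<open>auto simp: unimodal_at_def\<close>)

lemma unimodal_dec: assumes "unimodal_at f m" "m \<le> i" "i \<le> j" shows "f j \<le> f i"
  by (rule lift_Suc_antimono_le_ivl[of "{m..}" f i j]) (use assms in \<open>auto simp: unimodal_at_def\<close>)

lemma unimodal_max: "unimodal_at f m \<Longrightarrow> f k \<le> f m"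
  by (cases "k \<le> m") (auto intro: unimodal_inc unimodal_dec)

lemma bb_var_bound:
  assumes par: "\<forall>j<n. 0 \<le> r j \<and> r j \<le> 1" and u: "unimodal_at (bb r n) m" and mn: "m \<le> n"
  shows "bern_var r n * (bb r n m)^2 \<le> 648"
proof -
  define f where "f = bb r n"
  define M where "M = f m"
  have nn: "\<And>k. 0 \<le> f k" unfolding f_def using bb_nonneg[OF par] .
  have uf: "unimodal_at f m" using u f_def by simp
  have lc: "LC f" unfolding f_def using bb_LC[OF par] .
  have tot: "\<And>N. (\<Sum>k<N. f k) \<le> 1" unfolding f_def using bb_sum_le1[OF par] .
  have Mpos: "0 < M"
  proof (rule ccontr)
    assume "\<not> 0 < M"
    then have "\<And>k. f k \<le> 0" using unimodal_max[OF uf] M_def by (meson le_less_trans not_le)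
    then have "(\<Sum>k<Suc n. f k) \<le> 0" by (intro sum_nonpos) auto
    moreover have "(\<Sum>k<Suc n. f k) = 1" unfolding f_def by (rule bb_sum1) simp
    ultimately show False by simp
  qed
  have V: "bern_var r n \<le> (\<Sum>k<Suc n. (real k - real m)^2 * f k)"
    using bb_sum_gen[of n "Suc n" "real m" r] unfolding f_def by simp
  have split: "{..<Suc n} = {..<m} \<union> {m..<Suc n}" using mn by auto
  have "(\<Sum>k<Suc n. (real k - real m)^2 * f k) =
      (\<Sum>k<m. (real k - real m)^2 * f k) + (\<Sum>k\<in>{m..<Suc n}. (real k - real m)^2 * f k)"
    unfolding split by (rule sum.union_disjoint) auto
  moreover have R: "(\<Sum>k\<in>{m..<Suc n}. (real k - real m)^2 * f k) \<le> 324 / M^2"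
  proof -
    define h where "h j = f (m + j)" for j
    have "(\<Sum>k\<in>{m..<Suc n}. (real k - real m)^2 * f k) =
        (\<Sum>k\<in>{0 + m..<(Suc n - m) + m}. (real k - real m)^2 * f k)" using mn by simp
    also have "\<dots> = (\<Sum>j\<in>{0..<Suc n - m}. (real j)^2 * h j)"
      unfolding sum.shift_bounds_nat_ivl h_def by (simp add: add.commute)
    also have "\<dots> \<le> 324 / (h 0)^2"
      unfolding atLeast0LessThan
    proof (rule tail_bound)
      show "0 \<le> h j" for j using nn h_def by simp
      show "h (Suc j) \<le> h j" for j unfolding h_def using uf by (simp add: unimodal_at_def)
      show "0 < h 0" using Mpos h_def M_def by simp
      show "h 0 * h (a + b) \<le> h a * h b" for a b
        unfolding h_def by (rule lc[unfolded LC_def, rule_format]) auto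
      show "(\<Sum>j<N. h j) \<le> 1" for N
      proof -
        have "(\<Sum>j<N. h j) = (\<Sum>k\<in>{0 + m..<N + m}. f k)"
          unfolding sum.shift_bounds_nat_ivl h_def by (simp add: add.commute atLeast0LessThan)
        also have "\<dots> \<le> (\<Sum>k<N + m. f k)" using nn by (intro sum_mono2) auto
        also have "\<dots> \<le> 1" by (rule tot)
        finally show ?thesis .
      qed
    qed
    finally show ?thesis using h_def M_def by simp
  qed
  moreover have L: "(\<Sum>k<m. (real k - real m)^2 * f k) \<le> 324 / M^2"
  proof -
    define h where "h j = (if j \<le> m then f (m - j) else 0)" for j
    have "(\<Sum>k<m. (real k - real m)^2 * f k) = (\<Sum>i<m. (real (m - Suc i) - real m)^2 * f (m - Suc i))"
      by (rule sum.nat_diff_reindex[symmetric])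
    also have "\<dots> = (\<Sum>i<m. (real (Suc i))^2 * h (Suc i))"
    proof (rule sum.cong)
      fix i assume "i \<in> {..<m}"
      then have "real (m - Suc i) - real m = - real (Suc i)" by (simp add: of_nat_diff)
      then show "(real (m - Suc i) - real m)^2 * f (m - Suc i) = (real (Suc i))^2 * h (Suc i)"
        using \<open>i \<in> {..<m}\<close> by (simp add: h_def power2_eq_square algebra_simps)
    qed simp
    also have "\<dots> = (\<Sum>j<Suc m. (real j)^2 * h j)"
      by (subst sum.lessThan_Suc_shift) simp
    also have "\<dots> \<le> 324 / (h 0)^2"
    proof (rule tail_bound)
      show "0 \<le> h j" for j using nn h_def by simp
      show "h (Suc j) \<le> h j" for j
      proof (cases "Suc j \<le> m")
        case True
        then have "f (m - Suc j) \<le> f (m - j)" by (intro unimodal_inc[OF uf]) auto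
        then show ?thesis using True h_def by simp
      next
        case False then show ?thesis using nn h_def by simp
      qed
      show "0 < h 0" using Mpos h_def M_def by simp
      show "h 0 * h (a + b) \<le> h a * h b" for a b
      proof (cases "a + b \<le> m")
        case True
        have "f (m - (a + b)) * f m \<le> f (m - a) * f (m - b)"
          by (rule lc[unfolded LC_def, rule_format]) (use True in auto)
        then show ?thesis using True h_def by (simp add: mult.commute)
      next
        case False
        then show ?thesis using nn h_def by (simp add: mult_nonneg_nonneg)
      qed
      show "(\<Sum>j<N. h j) \<le> 1" for N
      proof -
        have "(\<Sum>j<N. h j) \<le> (\<Sum>j<max N (Suc m). h j)"
          using nn h_def by (intro sum_mono2) auto
        also have "\<dots> = (\<Sum>j<Suc m. h j)"
          by (rule sum.mono_neutral_right) (auto simp: h_def)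
        also have "\<dots> = (\<Sum>j<Suc m. f (Suc m - Suc j))"
          by (rule sum.cong) (auto simp: h_def)
        also have "\<dots> = (\<Sum>k<Suc m. f k)" by (rule sum.nat_diff_reindex)
        also have "\<dots> \<le> 1" by (rule tot)
        finally show ?thesis .
      qed
    qed
    finally show ?thesis using h_def M_def by simp
  qed
  ultimately have "bern_var r n \<le> 648 / M^2" using V by simp
  then have "bern_var r n * M^2 \<le> 648" using Mpos by (simp add: field_simps)
  then show ?thesis using M_def f_def by simp
qed

lemma bb_anticonc:
  assumes par: "\<forall>j<n. 0 \<le> r j \<and> r j \<le> 1" and v: "0 < bern_var r n"
  shows "bb r n k \<le> sqrt 648 / sqrt (bern_var r n)"
proof -
  obtain m where m: "m \<le> n" "unimodal_at (bb r n) m" using bb_unimodal[OF par] by auto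
  have b: "bern_var r n * (bb r n m)^2 \<le> 648" by (rule bb_var_bound[OF par m(2) m(1)])
  have "bb r n k \<le> bb r n m" by (rule unimodal_max[OF m(2)])
  moreover have "0 \<le> bb r n k" using bb_nonneg[OF par] .
  ultimately have "bern_var r n * (bb r n k)^2 \<le> 648"
    using b v by (meson mult_left_mono order_trans power_mono less_imp_le)
  then have "(bb r n k)^2 \<le> 648 / bern_var r n" using v by (simp add: field_simps)
  then have "bb r n k \<le> sqrt (648 / bern_var r n)" using real_le_rsqrt by blast
  then show ?thesis by (simp add: real_sqrt_divide)
qed

definition etaS :: "real set" where
  "etaS = {c. \<forall>(n::nat) (p::nat \<Rightarrow> real).
      (\<forall>i<n. 0 \<le> p i \<and> p i \<le> 1) \<longrightarrow> bern_var p n > 0 \<longrightarrow>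
      (\<forall>k. pmf (bern_sum p n) k \<le> c / sqrt (bern_var p n))}"

lemma eta_eq: "eta_BCV = Inf etaS" unfolding eta_BCV_def etaS_def ..

lemma etaS_ne: "sqrt 648 \<in> etaS"
  unfolding etaS_def using bb_anticonc bb_pmf by simp

lemma eta_prop:
  assumes par: "\<forall>j<n. 0 \<le> r j \<and> r j \<le> 1" and v: "0 < bern_var r n"
  shows "bb r n k \<le> eta_BCV / sqrt (bern_var r n)"
proof -
  have "bb r n k * sqrt (bern_var r n) \<le> Inf etaS"
  proof (rule cInf_greatest)
    show "etaS \<noteq> {}" using etaS_ne by auto
    fix c assume "c \<in> etaS"
    then have "pmf (bern_sum r n) k \<le> c / sqrt (bern_var r n)" unfolding etaS_def using par v by blast
    then show "bb r n k * sqrt (bern_var r n) \<le> c" using bb_pmf[OF par] v by (simp add: field_simps)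
  qed
  then show ?thesis using v eta_eq by (simp add: field_simps)
qed

lemma eta_nonneg: "0 \<le> eta_BCV"
proof -
  let ?r = "\<lambda>_::nat. 1/2 :: real"
  have v: "bern_var ?r 1 = 1/4" by (simp add: bern_var_def)
  have "bb ?r 1 0 \<le> eta_BCV / sqrt (bern_var ?r 1)" by (rule eta_prop) (auto simp: bern_var_def)
  moreover have "bb ?r 1 0 = 1/2" by (simp add: stepf_def sh_def)
  ultimately have "0 < eta_BCV / sqrt (bern_var ?r 1)" by linarith
  moreover have "0 < sqrt (bern_var ?r 1)" using v by simp
  ultimately show ?thesis by (simp add: zero_less_divide_iff)
qed


definition Pt :: "(nat \<Rightarrow> real) \<Rightarrow> (nat \<Rightarrow> real) \<Rightarrow> real \<Rightarrow> nat \<Rightarrow> real" where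
  "Pt p q t j = p j + t * (q j - p j)"

lemma skip_Pt: "skip i (Pt p q t) = Pt (skip i p) (skip i q) t"
  by (rule ext) (simp add: skip_def Pt_def)

lemma term_step: "d * (sh (stepf W a) k - stepf W a k) =
   (1 - a) * (d * (sh W k - W k)) + a * (if k = 0 then 0 else d * (sh W (k - 1) - W (k - 1)))"
  by (cases k) (simp_all add: sh_def stepf_def algebra_simps)

lemma bb_deriv:
  "((\<lambda>t. bb (Pt p q t) n k) has_real_derivative
     (\<Sum>i<n. (q i - p i) * (sh (bb (Pt (skip i p) (skip i q) t) (n - 1)) k
                              - bb (Pt (skip i p) (skip i q) t) (n - 1) k))) (at t)"
proof (induction n arbitrary: k)
  case 0
  then show ?case by simp
next
  case (Suc n)
  define W where "W i = bb (Pt (skip i p) (skip i q) t) (n - 1)" for i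
  define a where "a = Pt p q t n"
  define F' where "F' k = (\<Sum>i<n. (q i - p i) * (sh (W i) k - W i k))" for k
  have F: "((\<lambda>t. bb (Pt p q t) n k) has_real_derivative F' k) (at t)" for k
    using Suc.IH[of k] unfolding F'_def W_def .
  define G' where "G' = (if k = 0 then 0 else F' (k - 1))"
  have G: "((\<lambda>t. sh (bb (Pt p q t) n) k) has_real_derivative G') (at t)"
  proof (cases k)
    case 0 then show ?thesis by (simp add: sh_def G'_def)
  next
    case (Suc k') then show ?thesis using F[of k'] by (simp add: sh_def G'_def)
  qed
  have A: "((\<lambda>t. Pt p q t n) has_real_derivative (q n - p n)) (at t)"
    unfolding Pt_def by (auto intro!: derivative_eq_intros)
  note d1 = DERIV_mult[OF DERIV_diff[OF DERIV_const[of 1] A] F[of k]]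
  note d2 = DERIV_mult[OF A G]
  have fe: "(\<lambda>t. bb (Pt p q t) (Suc n) k) =
    (\<lambda>t. (1 - Pt p q t n) * bb (Pt p q t) n k + Pt p q t n * sh (bb (Pt p q t) n) k)"
    by (simp add: stepf_def)
  have Wst: "bb (Pt (skip i p) (skip i q) t) (Suc n - 1) = stepf (W i) a" if hi: "i < n" for i
  proof -
    obtain n' where n': "n = Suc n'" using hi by (cases n) auto
    have "Pt (skip i p) (skip i q) t n' = a" using hi n' by (simp add: Pt_def skip_def a_def)
    then show ?thesis using n' by (simp add: W_def)
  qed
  have Wn: "bb (Pt (skip n p) (skip n q) t) (Suc n - 1) = bb (Pt p q t) n"
    by simp (rule bb_cong, simp add: Pt_def skip_def)
  have "(\<Sum>i<Suc n. (q i - p i) * (sh (bb (Pt (skip i p) (skip i q) t) (Suc n - 1)) k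
                              - bb (Pt (skip i p) (skip i q) t) (Suc n - 1) k))
     = (\<Sum>i<n. (q i - p i) * (sh (stepf (W i) a) k - stepf (W i) a k))
       + (q n - p n) * (sh (bb (Pt p q t) n) k - bb (Pt p q t) n k)"
    using Wst Wn by simp
  also have "(\<Sum>i<n. (q i - p i) * (sh (stepf (W i) a) k - stepf (W i) a k))
     = (1 - a) * F' k + a * G'"
  proof -
    have "(\<Sum>i<n. (q i - p i) * (sh (stepf (W i) a) k - stepf (W i) a k)) =
      (\<Sum>i<n. (1 - a) * ((q i - p i) * (sh (W i) k - W i k)) +
          a * (if k = 0 then 0 else (q i - p i) * (sh (W i) (k - 1) - W i (k - 1))))"
      by (simp only: term_step)
    also have "\<dots> = (1 - a) * F' k + a * G'"
      by (cases "k = 0") (simp_all add: sum.distrib sum_distrib_left F'_def G'_def)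
    finally show ?thesis .
  qed
  finally have ve: "(\<Sum>i<Suc n. (q i - p i) * (sh (bb (Pt (skip i p) (skip i q) t) (Suc n - 1)) k
                              - bb (Pt (skip i p) (skip i q) t) (Suc n - 1) k))
    = (0 - (q n - p n)) * bb (Pt p q t) n k + F' k * (1 - Pt p q t n) +
      ((q n - p n) * sh (bb (Pt p q t) n) k + G' * Pt p q t n)"
    by (simp add: a_def algebra_simps)
  show ?case unfolding fe ve by (rule DERIV_add[OF d1 d2])
qed


lemma bern_var_nonneg: "(\<forall>j<n. 0 \<le> r j \<and> r j \<le> 1) \<Longrightarrow> 0 \<le> bern_var r n"
  unfolding bern_var_def by (intro sum_nonneg) auto

lemma Pt_par:
  assumes "\<forall>j<n. 0 \<le> p j \<and> p j \<le> 1" "\<forall>j<n. 0 \<le> q j \<and> q j \<le> 1" "0 \<le> t" "t \<le> 1"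
  shows "\<forall>j<n. 0 \<le> Pt p q t j \<and> Pt p q t j \<le> 1"
proof (intro allI impI)
  fix j assume j: "j < n"
  have e: "Pt p q t j = (1 - t) * p j + t * q j" by (simp add: Pt_def algebra_simps)
  have "0 \<le> (1 - t) * p j" "0 \<le> t * q j" using assms j by auto
  moreover have "(1 - t) * p j \<le> (1 - t)" "t * q j \<le> t" using assms j
    by (auto intro: mult_left_le)
  ultimately show "0 \<le> Pt p q t j \<and> Pt p q t j \<le> 1" unfolding e by linarith
qed

lemma bern_var_concave:
  assumes "0 \<le> t" "t \<le> 1"
  shows "(1 - t) * bern_var p n + t * bern_var q n \<le> bern_var (Pt p q t) n"
proof -
  have "bern_var (Pt p q t) n = (\<Sum>i<n. (1 - t) * (p i * (1 - p i)) + t * (q i * (1 - q i))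
       + t * (1 - t) * (q i - p i)^2)"
    unfolding bern_var_def by (rule sum.cong) (simp_all add: Pt_def power2_eq_square algebra_simps)
  also have "\<dots> \<ge> (\<Sum>i<n. (1 - t) * (p i * (1 - p i)) + t * (q i * (1 - q i)))"
    using assms by (intro sum_mono) auto
  finally show ?thesis unfolding bern_var_def by (simp add: sum.distrib sum_distrib_left)
qed

lemma key_M:
  fixes W eta v s :: real
  assumes "0 \<le> W" "W \<le> 1" "0 < v \<Longrightarrow> W \<le> eta / sqrt v" "s - 1/4 \<le> v" "0 \<le> s" "0 \<le> eta"
  shows "W \<le> sqrt (5/4 + eta^2) / sqrt (s + 1)"
proof -
  have "W^2 \<le> (5/4 + eta^2) / (s + 1)"
  proof (cases "s + 1 \<le> 5/4 + eta^2")
    case True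
    have "W^2 \<le> 1" using assms by (simp add: power_le_one)
    also have "1 \<le> (5/4 + eta^2) / (s + 1)" using True assms by simp
    finally show ?thesis .
  next
    case False
    define u where "u = s - 1/4"
    have u: "eta^2 < u" using False u_def by simp
    have upos: "0 < u" using u by (smt (verit) zero_le_power2)
    have vpos: "0 < v" using assms u_def upos by simp
    have "W \<le> eta / sqrt v" using assms vpos by simp
    also have "\<dots> \<le> eta / sqrt u" using assms upos u_def
      by (intro divide_left_mono) (auto simp: real_sqrt_le_mono)
    finally have W: "W \<le> eta / sqrt u" .
    have "W^2 \<le> (eta / sqrt u)^2" using W assms by (intro power_mono) auto
    also have "\<dots> = eta^2 / u" using upos by (simp add: power_divide)
    also have "\<dots> \<le> (5/4 + eta^2) / (s + 1)"
    proof -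
      have "s + 1 = u + 5/4" using u_def by simp
      then have "eta^2 * (s + 1) = eta^2 * u + 5/4 * eta^2" by (simp add: algebra_simps)
      also have "\<dots> \<le> eta^2 * u + 5/4 * u" using u by simp
      finally have "eta^2 * (s + 1) \<le> (5/4 + eta^2) * u" by (simp add: algebra_simps)
      then show ?thesis using upos assms by (simp add: field_simps)
    qed
    finally show ?thesis .
  qed
  then have "W \<le> sqrt ((5/4 + eta^2) / (s + 1))" using real_le_rsqrt by blast
  then show ?thesis by (simp add: real_sqrt_divide)
qed

lemma C_BCV_eq: "C_BCV = sqrt (5/4 + eta_BCV^2)" unfolding C_BCV_def ..

lemma W_bound:
  assumes par: "\<forall>j<m. 0 \<le> r j \<and> r j \<le> 1" and s: "s - 1/4 \<le> bern_var r m" "0 \<le> s"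
  shows "(\<Sum>k<Suc (Suc m). \<bar>sh (bb r m) k - bb r m k\<bar>) \<le> 2 * C_BCV / sqrt (s + 1)"
proof -
  obtain m0 where m0: "m0 \<le> m" "unimodal_at (bb r m) m0" using bb_unimodal[OF par] by auto
  have "(\<Sum>k<Suc (Suc m). \<bar>sh (bb r m) k - bb r m k\<bar>) = (\<Sum>k<Suc (Suc m). \<bar>bb r m k - sh (bb r m) k\<bar>)"
    by (simp add: abs_minus_commute)
  also have "\<dots> = 2 * bb r m m0 - bb r m (Suc m)"
    using tele_abs[OF m0(2), of "Suc m"] bb_nonneg[OF par] m0(1) by simp
  also have "bb r m (Suc m) = 0" by (rule bb_support) simp
  finally have e: "(\<Sum>k<Suc (Suc m). \<bar>sh (bb r m) k - bb r m k\<bar>) = 2 * bb r m m0" by simp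
  have W1: "bb r m m0 \<le> 1"
  proof -
    have "bb r m m0 \<le> (\<Sum>k<Suc m0. bb r m k)"
      using bb_nonneg[OF par] by (intro member_le_sum) auto
    also have "\<dots> \<le> 1" by (rule bb_sum_le1[OF par])
    finally show ?thesis .
  qed
  have "bb r m m0 \<le> sqrt (5/4 + eta_BCV^2) / sqrt (s + 1)"
    by (rule key_M[OF bb_nonneg[OF par] W1 eta_prop[OF par] s eta_nonneg])
  then show ?thesis unfolding e C_BCV_eq by simp
qed


definition Dv :: "(nat \<Rightarrow> real) \<Rightarrow> (nat \<Rightarrow> real) \<Rightarrow> nat \<Rightarrow> real \<Rightarrow> nat \<Rightarrow> real" where
  "Dv p q n t k = (\<Sum>i<n. (q i - p i) * (sh (bb (Pt (skip i p) (skip i q) t) (n - 1)) k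
                              - bb (Pt (skip i p) (skip i q) t) (n - 1) k))"

lemma pointwise:
  assumes n: "n \<ge> 1" and p: "\<forall>j<n. 0 \<le> p j \<and> p j \<le> 1" and q: "\<forall>j<n. 0 \<le> q j \<and> q j \<le> 1"
    and t: "0 \<le> t" "t \<le> 1"
  shows "(\<Sum>k<Suc n. \<bar>Dv p q n t k\<bar>) \<le> (\<Sum>i<n. \<bar>p i - q i\<bar>) * (2 * C_BCV /
      sqrt ((bern_var p n + 1) + t * ((bern_var q n + 1) - (bern_var p n + 1))))"
proof -
  define r where "r = Pt p q t"
  define s where "s = bern_var r n"
  define LL where "LL = (bern_var p n + 1) + t * ((bern_var q n + 1) - (bern_var p n + 1))"
  define Z where "Z = 2 * C_BCV / sqrt LL"
  have rpar: "\<forall>j<n. 0 \<le> r j \<and> r j \<le> 1" unfolding r_def by (rule Pt_par[OF p q t])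
  have s0: "0 \<le> s" unfolding s_def by (rule bern_var_nonneg[OF rpar])
  have LLs: "LL \<le> s + 1"
    using bern_var_concave[OF t, of p n q] unfolding LL_def s_def r_def by (simp add: algebra_simps)
  have LL1: "1 \<le> LL"
  proof -
    have "0 \<le> (1 - t) * bern_var p n" "0 \<le> t * bern_var q n"
      using bern_var_nonneg[OF p] bern_var_nonneg[OF q] t by auto
    then show ?thesis unfolding LL_def by (simp add: algebra_simps)
  qed
  have Cnn: "0 \<le> C_BCV" unfolding C_BCV_def by simp
  obtain m where m: "n = Suc m" using n by (cases n) auto
  have Wb: "(\<Sum>k<Suc n. \<bar>sh (bb (Pt (skip i p) (skip i q) t) (n - 1)) k
              - bb (Pt (skip i p) (skip i q) t) (n - 1) k\<bar>) \<le> Z" if i: "i < n" for i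
  proof -
    have e: "Pt (skip i p) (skip i q) t = skip i r" unfolding r_def skip_Pt ..
    have par': "\<forall>j<m. 0 \<le> skip i r j \<and> skip i r j \<le> 1" using rpar m by (auto simp: skip_def)
    have "s = bern_var (skip i r) m + r i * (1 - r i)" unfolding s_def using bern_var_skip[OF i, of r] m by simp
    moreover have "r i * (1 - r i) \<le> 1/4"
    proof -
      have "1/4 - r i * (1 - r i) = (r i - 1/2)^2" by (simp add: power2_eq_square algebra_simps)
      moreover have "0 \<le> (r i - 1/2)^2" by simp
      ultimately show ?thesis by linarith
    qed
    ultimately have sv: "s - 1/4 \<le> bern_var (skip i r) m" by simp
    have "(\<Sum>k<Suc (Suc m). \<bar>sh (bb (skip i r) m) k - bb (skip i r) m k\<bar>) \<le> 2 * C_BCV / sqrt (s + 1)"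
      by (rule W_bound[OF par' sv s0])
    also have "\<dots> \<le> Z" unfolding Z_def using LLs LL1 Cnn
      by (intro divide_left_mono mult_pos_pos) (auto simp: real_sqrt_le_mono)
    finally show ?thesis using e m by simp
  qed
  have "(\<Sum>k<Suc n. \<bar>Dv p q n t k\<bar>) \<le> (\<Sum>k<Suc n. \<Sum>i<n. \<bar>q i - p i\<bar> *
      \<bar>sh (bb (Pt (skip i p) (skip i q) t) (n - 1)) k - bb (Pt (skip i p) (skip i q) t) (n - 1) k\<bar>)"
    unfolding Dv_def by (intro sum_mono, rule order.trans[OF sum_abs]) (simp add: abs_mult)
  also have "\<dots> = (\<Sum>i<n. \<bar>q i - p i\<bar> * (\<Sum>k<Suc n.
      \<bar>sh (bb (Pt (skip i p) (skip i q) t) (n - 1)) k - bb (Pt (skip i p) (skip i q) t) (n - 1) k\<bar>))"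
    by (simp only: sum_distrib_left) (rule sum.swap)
  also have "\<dots> \<le> (\<Sum>i<n. \<bar>q i - p i\<bar> * Z)"
    by (intro sum_mono mult_left_mono Wb) auto
  also have "\<dots> = (\<Sum>i<n. \<bar>p i - q i\<bar>) * Z" by (simp add: sum_distrib_right abs_minus_commute)
  finally show ?thesis unfolding Z_def LL_def .
qed


definition HH :: "real \<Rightarrow> real \<Rightarrow> real \<Rightarrow> real" where
  "HH A B t = (if A = B then t / sqrt A else 2 * sqrt (A + t * (B - A)) / (B - A))"

lemma aux1: fixes x s :: real assumes "x \<noteq> 0" shows "2 * (inverse s / 2 * x) / x = 1 / s"
  using assms by (simp add: field_simps)

lemma aux2: fixes a b :: real assumes "a - b \<noteq> 0" "a + b \<noteq> 0"
  shows "2 * (a - b) / ((a - b) * (a + b)) = 2 / (a + b)"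
proof -
  have "2 * (a - b) / ((a - b) * (a + b)) = ((a - b) * 2) / ((a - b) * (a + b))"
    by (simp only: mult.commute)
  also have "\<dots> = 2 / (a + b)" by (rule nonzero_mult_divide_mult_cancel_left) (use assms in simp)
  finally show ?thesis .
qed

lemma HH_deriv:
  assumes "0 < A + t * (B - A)"
  shows "(HH A B has_real_derivative 1 / sqrt (A + t * (B - A))) (at t)"
proof (cases "A = B")
  case True
  have "HH A B = (\<lambda>t. t / sqrt A)" by (rule ext) (simp add: HH_def True)
  moreover have "((\<lambda>t. t / sqrt A) has_real_derivative 1 / sqrt A) (at t)"
    by (rule DERIV_cdivide[OF DERIV_ident])
  ultimately show ?thesis using True by simp
next
  case False
  have d: "((\<lambda>t. sqrt (A + t * (B - A))) has_real_derivative inverse (sqrt (A + t * (B - A))) / 2 * (B - A)) (at t)"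
  proof -
    have d0: "DERIV sqrt (A + t * (B - A)) :> inverse (sqrt (A + t * (B - A))) / 2"
      by (rule DERIV_real_sqrt[OF assms])
    have d1: "((\<lambda>t. A + t * (B - A)) has_real_derivative (B - A)) (at t)"
      by (auto intro!: derivative_eq_intros)
    show ?thesis using DERIV_chain2[where f=sqrt and g="\<lambda>t. A + t * (B - A)", OF d0 d1] by simp
  qed
  have "((\<lambda>t. 2 * sqrt (A + t * (B - A)) / (B - A)) has_real_derivative
      2 * (inverse (sqrt (A + t * (B - A))) / 2 * (B - A)) / (B - A)) (at t)"
    by (rule DERIV_cdivide[OF DERIV_cmult[OF d]])
  moreover have "2 * (inverse (sqrt (A + t * (B - A))) / 2 * (B - A)) / (B - A) = 1 / sqrt (A + t * (B - A))"
  proof -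
    have "B - A \<noteq> 0" using False by simp
    then show ?thesis by (rule aux1)
  qed
  ultimately show ?thesis unfolding HH_def using False by simp
qed

lemma HH_diff:
  assumes "0 < A" "0 < B"
  shows "HH A B 1 - HH A B 0 = 2 / (sqrt A + sqrt B)"
proof (cases "A = B")
  case True
  then show ?thesis unfolding HH_def using assms by simp
next
  case False
  have sa: "sqrt B - sqrt A \<noteq> 0" using False assms by simp
  have f: "B - A = (sqrt B - sqrt A) * (sqrt B + sqrt A)"
    using assms by (simp add: algebra_simps)
  have "HH A B 1 - HH A B 0 = 2 * (sqrt B - sqrt A) / (B - A)"
    by (simp add: HH_def False diff_divide_distrib algebra_simps)
  also have "\<dots> = 2 * (sqrt B - sqrt A) / ((sqrt B - sqrt A) * (sqrt B + sqrt A))" using f by simp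
  also have "\<dots> = 2 / (sqrt B + sqrt A)"
  proof -
    have "0 < sqrt B + sqrt A" using assms by (intro add_pos_pos) auto
    then show ?thesis using sa by (intro aux2) auto
  qed
  finally show ?thesis by (simp add: add.commute)
qed


lemma TV_bb:
  assumes p: "\<forall>j<n. 0 \<le> p j \<and> p j \<le> 1" and q: "\<forall>j<n. 0 \<le> q j \<and> q j \<le> 1"
  shows "TV (bern_sum p n) (bern_sum q n) = 1/2 * (\<Sum>k<Suc n. \<bar>bb q n k - bb p n k\<bar>)"
proof -
  have "(\<Sum>\<^sub>\<infinity>k. \<bar>pmf (bern_sum p n) k - pmf (bern_sum q n) k\<bar>) =
        (\<Sum>\<^sub>\<infinity>k\<in>{..<Suc n}. \<bar>bb q n k - bb p n k\<bar>)"
    by (rule infsum_cong_neutral) (auto simp: bb_pmf[OF p] bb_pmf[OF q] bb_support abs_minus_commute)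
  then show ?thesis unfolding TV_def by simp
qed

theorem theorem6:
  fixes n :: nat and p q :: "nat \<Rightarrow> real"
  assumes "n \<ge> 1"
    and "\<forall>i<n. 0 \<le> p i \<and> p i \<le> 1"
    and "\<forall>i<n. 0 \<le> q i \<and> q i \<le> 1"
  shows "TV (bern_sum p n) (bern_sum q n)
     \<le> 2 * C_BCV * (\<Sum>i<n. \<bar>p i - q i\<bar>)
         / (sqrt (bern_var p n + 1) + sqrt (bern_var q n + 1))"
proof -
  note n = assms(1) and p = assms(2) and q = assms(3)
  define A where "A = bern_var p n + 1"
  define B where "B = bern_var q n + 1"
  define Dl where "Dl = (\<Sum>i<n. \<bar>p i - q i\<bar>)"
  define sg where "sg k = sgn (bb q n k - bb p n k)" for k
  define g where "g t = (\<Sum>k<Suc n. sg k * bb (Pt p q t) n k)" for t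
  define g' where "g' t = (\<Sum>k<Suc n. sg k * Dv p q n t k)" for t
  define Phi where "Phi t = 2 * C_BCV * Dl * HH A B t - g t" for t
  define Phi' where "Phi' t = 2 * C_BCV * Dl * (1 / sqrt (A + t * (B - A))) - g' t" for t
  have A1: "1 \<le> A" unfolding A_def using bern_var_nonneg[OF p] by simp
  have B1: "1 \<le> B" unfolding B_def using bern_var_nonneg[OF q] by simp
  have gd: "(g has_real_derivative g' t) (at t)" for t
    unfolding g_def g'_def Dv_def
    by (intro DERIV_sum DERIV_cmult bb_deriv)
  have mono: "Phi 0 \<le> Phi 1"
  proof (rule deriv_nonneg_imp_mono[of 0 1 Phi Phi'])
    fix t :: real assume t: "t \<in> {0..1}"
    have LLpos: "0 < A + t * (B - A)"
    proof -
      have "A + t * (B - A) = (1 - t) * A + t * B" by (simp add: algebra_simps)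
      moreover have "0 \<le> (1 - t) * A" "0 \<le> t * B" using t A1 B1 by auto
      moreover have "1 \<le> (1 - t) * A + t * B"
      proof -
        have "(1 - t) * 1 \<le> (1 - t) * A" using t A1 by (intro mult_left_mono) auto
        moreover have "t * 1 \<le> t * B" using t B1 by (intro mult_left_mono) auto
        ultimately have "(1 - t) * 1 \<le> (1 - t) * A" "t * 1 \<le> t * B" by auto
        then show ?thesis by simp
      qed
      ultimately show ?thesis by simp
    qed
    show "(Phi has_real_derivative Phi' t) (at t)"
      unfolding Phi_def[abs_def] Phi'_def
      by (intro DERIV_diff DERIV_cmult HH_deriv LLpos gd)
    have "g' t \<le> (\<Sum>k<Suc n. \<bar>Dv p q n t k\<bar>)"
      unfolding g'_def
    proof (rule sum_mono)
      fix k
      have "sg k * Dv p q n t k \<le> \<bar>sg k * Dv p q n t k\<bar>" by simp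
      also have "\<dots> \<le> \<bar>Dv p q n t k\<bar>" unfolding sg_def abs_mult
        by (intro mult_left_le_one_le) (auto simp: abs_sgn_eq)
      finally show "sg k * Dv p q n t k \<le> \<bar>Dv p q n t k\<bar>" .
    qed
    also have "\<dots> \<le> Dl * (2 * C_BCV / sqrt (A + t * (B - A)))"
      unfolding Dl_def A_def B_def using pointwise[OF n p q] t by simp
    finally show "0 \<le> Phi' t" unfolding Phi'_def by (simp add: mult_ac)
  qed simp
  have Pt1: "Pt p q 1 = q" by (rule ext) (simp add: Pt_def)
  have Pt0: "Pt p q 0 = p" by (rule ext) (simp add: Pt_def)
  have g10: "g 1 - g 0 = (\<Sum>k<Suc n. \<bar>bb q n k - bb p n k\<bar>)"
    unfolding g_def Pt1 Pt0 sum_subtractf[symmetric]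
    by (rule sum.cong) (auto simp: sg_def sgn_if right_diff_distrib[symmetric] abs_if)
  have "g 1 - g 0 \<le> 2 * C_BCV * Dl * (HH A B 1 - HH A B 0)"
    using mono unfolding Phi_def by (simp add: algebra_simps)
  also have "HH A B 1 - HH A B 0 = 2 / (sqrt A + sqrt B)" using A1 B1 by (intro HH_diff) auto
  finally have "(\<Sum>k<Suc n. \<bar>bb q n k - bb p n k\<bar>) \<le> 2 * C_BCV * Dl * (2 / (sqrt A + sqrt B))"
    using g10 by simp
  then show ?thesis unfolding TV_bb[OF p q] Dl_def A_def B_def by (simp add: field_simps)
qed

end
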